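(* Let $w_1, w_2 \geq 0$ with $w_1 + w_2 > 0$. Both for the class of sequential two-player weighted congestion games with affine costs, proportional cost functions and player weights $w_1,w_2$ (player 1 moving first), and for its subclass of network routing games, the price of anarchy (with respect to subgame-perfect equilibria) is equal to \[ 1 + \frac{w_1w_2}{w_1^2 + w_2^2}. \]
   Context: A weighted two-player congestion game with affine costs consists of a finite set $R$ of resources, coefficients $\alpha_r,\beta_r \geq 0$ for each $r\in R$, two players $i=1,2$ with weights $w_i\ge 0$, and for each player $i$ a nonempty finite set $\mathcal{A}_i \subseteq 2^R$ of actions. For an action profile $A=(A_1,A_2)$ the load of $r$ is $x_r(A)=\sum_{j:\, r\in A_j} w_j$. With proportional costs, player $i$ pays $C_i(A)=w_i\sum_{r\in A_i}(\alpha_r+\beta_r x_r(A))$. The social cost is $C(A)=C_1(A)+C_2(A)$. In a network routing game, $R$ is the arc set of a directed graph, player $i$ has a source $s_i$ and sink $t_i$, and $\mathcal{A}_i$ is the set of arc sets of directed $s_i$–$t_i$ paths. In the sequential game, player 1 (weight $w_1$) chooses $A_1$ first, then player 2 (weight $w_2$), knowing $A_1$, chooses $A_2$. A subgame-perfect equilibrium consists of a function $A_1\mapsto A_2^*(A_1)$ with $C_2(A_1,A_2^*(A_1))\le C_2(A_1,A_2)$ for all $A_1,A_2$, and an action $A_1^*$ with $C_1(A_1^*,A_2^*(A_1^* ))\le C_1(A_1,A_2^*(A_1))$ for all $A_1$; its outcome is $(A_1^*,A_2^*(A_1^* ))$. The price of anarchy of an instance is the maximum over subgame-perfect equilibrium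 outcomes $A$ of $C(A)/\min_{A'}C(A')$; the price of anarchy of a class is the supremum over all instances (with positive optimal social cost). *)

theory Defs
  imports Main "HOL.Real"
begin

definition load :: "real \<Rightarrow> real \<Rightarrow> 'r set \<Rightarrow> 'r set \<Rightarrow> 'r \<Rightarrow> real" where
  "load w1 w2 A1 A2 r = (if r \<in> A1 then w1 else 0) + (if r \<in> A2 then w2 else 0)"

definition cost1 :: "('r \<Rightarrow> real) \<Rightarrow> ('r \<Rightarrow> real) \<Rightarrow> real \<Rightarrow> real \<Rightarrow> 'r set \<Rightarrow> 'r set \<Rightarrow> real" where
  "cost1 \<alpha> \<beta> w1 w2 A1 A2 = w1 * (\<Sum>r\<in>A1. \<alpha> r + \<beta> r * load w1 w2 A1 A2 r)"

definition cost2 :: "('r \<Rightarrow> real) \<Rightarrow> ('r \<Rightarrow> real) \<Rightarrow> real \<Rightarrow> real \<Rightarrow> 'r set \<Rightarrow> 'r set \<Rightarrow> real" where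
  "cost2 \<alpha> \<beta> w1 w2 A1 A2 = w2 * (\<Sum>r\<in>A2. \<alpha> r + \<beta> r * load w1 w2 A1 A2 r)"

definition social_cost :: "('r \<Rightarrow> real) \<Rightarrow> ('r \<Rightarrow> real) \<Rightarrow> real \<Rightarrow> real \<Rightarrow> 'r set \<Rightarrow> 'r set \<Rightarrow> real" where
  "social_cost \<alpha> \<beta> w1 w2 A1 A2 = cost1 \<alpha> \<beta> w1 w2 A1 A2 + cost2 \<alpha> \<beta> w1 w2 A1 A2"

definition valid_game :: "'r set \<Rightarrow> ('r \<Rightarrow> real) \<Rightarrow> ('r \<Rightarrow> real) \<Rightarrow> 'r set set \<Rightarrow> 'r set set \<Rightarrow> bool" where
  "valid_game R \<alpha> \<beta> As1 As2 \<longleftrightarrow>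
     finite R \<and> (\<forall>r\<in>R. \<alpha> r \<ge> 0 \<and> \<beta> r \<ge> 0) \<and>
     finite As1 \<and> As1 \<noteq> {} \<and> (\<forall>A\<in>As1. A \<subseteq> R) \<and>
     finite As2 \<and> As2 \<noteq> {} \<and> (\<forall>A\<in>As2. A \<subseteq> R)"

text \<open>Subgame-perfect equilibrium of the sequential game (player 1 moves first):
  a strategy f of player 2 (reaction to A1) and an action A1s of player 1.\<close>

definition is_spe :: "('r \<Rightarrow> real) \<Rightarrow> ('r \<Rightarrow> real) \<Rightarrow> real \<Rightarrow> real \<Rightarrow> 'r set set \<Rightarrow> 'r set set
    \<Rightarrow> ('r set \<Rightarrow> 'r set) \<Rightarrow> 'r set \<Rightarrow> bool" where
  "is_spe \<alpha> \<beta> w1 w2 As1 As2 f A1s \<longleftrightarrow>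
     (\<forall>A1\<in>As1. f A1 \<in> As2 \<and>
        (\<forall>A2\<in>As2. cost2 \<alpha> \<beta> w1 w2 A1 (f A1) \<le> cost2 \<alpha> \<beta> w1 w2 A1 A2)) \<and>
     A1s \<in> As1 \<and>
     (\<forall>A1\<in>As1. cost1 \<alpha> \<beta> w1 w2 A1s (f A1s) \<le> cost1 \<alpha> \<beta> w1 w2 A1 (f A1))"

definition spe_outcomes :: "('r \<Rightarrow> real) \<Rightarrow> ('r \<Rightarrow> real) \<Rightarrow> real \<Rightarrow> real \<Rightarrow> 'r set set \<Rightarrow> 'r set set
    \<Rightarrow> ('r set \<times> 'r set) set" where
  "spe_outcomes \<alpha> \<beta> w1 w2 As1 As2 =
     {(A1s, f A1s) | f A1s. is_spe \<alpha> \<beta> w1 w2 As1 As2 f A1s}"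

definition opt_cost :: "('r \<Rightarrow> real) \<Rightarrow> ('r \<Rightarrow> real) \<Rightarrow> real \<Rightarrow> real \<Rightarrow> 'r set set \<Rightarrow> 'r set set \<Rightarrow> real" where
  "opt_cost \<alpha> \<beta> w1 w2 As1 As2 =
     Min {social_cost \<alpha> \<beta> w1 w2 A1 A2 | A1 A2. A1 \<in> As1 \<and> A2 \<in> As2}"

definition poa_instance :: "('r \<Rightarrow> real) \<Rightarrow> ('r \<Rightarrow> real) \<Rightarrow> real \<Rightarrow> real \<Rightarrow> 'r set set \<Rightarrow> 'r set set \<Rightarrow> real" where
  "poa_instance \<alpha> \<beta> w1 w2 As1 As2 =
     Max ((\<lambda>(A1, A2). social_cost \<alpha> \<beta> w1 w2 A1 A2 / opt_cost \<alpha> \<beta> w1 w2 As1 As2)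
            ` spe_outcomes \<alpha> \<beta> w1 w2 As1 As2)"

text \<open>A directed (multi)graph: arcs are the elements of R (type nat), each arc e
  goes from vertex src e to vertex tgt e.\<close>

definition is_path :: "nat set \<Rightarrow> (nat \<Rightarrow> nat) \<Rightarrow> (nat \<Rightarrow> nat) \<Rightarrow> nat \<Rightarrow> nat \<Rightarrow> nat list \<Rightarrow> bool" where
  "is_path R src tgt s t es \<longleftrightarrow>
     set es \<subseteq> R \<and>
     (es = [] \<longrightarrow> s = t) \<and>
     (es \<noteq> [] \<longrightarrow> src (hd es) = s \<and> tgt (last es) = t \<and>
        (\<forall>i. Suc i < length es \<longrightarrow> tgt (es ! i) = src (es ! Suc i))) \<and>
     distinct (s # map tgt es)"

definition path_actions :: "nat set \<Rightarrow> (nat \<Rightarrow> nat) \<Rightarrow> (nat \<Rightarrow> nat) \<Rightarrow> nat \<Rightarrow> nat \<Rightarrow> nat set set" where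
  "path_actions R src tgt s t = {set es | es. is_path R src tgt s t es}"

text \<open>Set of instance prices of anarchy over all instances (positive optimum);
  resources are drawn from nat (any finite resource set can be relabelled).\<close>

definition congestion_poas :: "real \<Rightarrow> real \<Rightarrow> real set" where
  "congestion_poas w1 w2 =
     {poa_instance \<alpha> \<beta> w1 w2 As1 As2 | (R :: nat set) \<alpha> \<beta> As1 As2.
        valid_game R \<alpha> \<beta> As1 As2 \<and> opt_cost \<alpha> \<beta> w1 w2 As1 As2 > 0}"

definition network_poas :: "real \<Rightarrow> real \<Rightarrow> real set" where
  "network_poas w1 w2 =
     {poa_instance \<alpha> \<beta> w1 w2 As1 As2 | (R :: nat set) \<alpha> \<beta> As1 As2 src tgt s1 t1 s2 t2.
        As1 = path_actions R src tgt s1 t1 \<and> As2 = path_actions R src tgt s2 t2 \<and>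
        valid_game R \<alpha> \<beta> As1 As2 \<and> opt_cost \<alpha> \<beta> w1 w2 As1 As2 > 0}"

definition is_supremum :: "real set \<Rightarrow> real \<Rightarrow> bool" where
  "is_supremum S \<rho> \<longleftrightarrow> (\<forall>x\<in>S. x \<le> \<rho>) \<and> (\<forall>\<epsilon>>0. \<exists>x\<in>S. \<rho> - \<epsilon> < x)"

end

theory Submission
  imports Defs
begin

lemma per_res:
  fixes w1 w2 a b p :: real and a1 a2 o1 o2 bb :: bool
  assumes w1: "w1 \<ge> 0" and w2: "w2 \<ge> 0" and a: "a \<ge> 0" and b: "b \<ge> 0"
    and p1: "p \<ge> 1" and pe: "(p - 1) * (w1\<^sup>2 + w2\<^sup>2) = w1 * w2"
  defines "ld \<equiv> \<lambda>x y. (if x then w1 else 0) + (if y then w2 else 0)"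
  defines "c1 \<equiv> \<lambda>x y. if x then w1 * (a + b * ld x y) else 0"
  defines "c2 \<equiv> \<lambda>x y. if y then w2 * (a + b * ld x y) else 0"
  shows "c1 a1 a2 + c2 a1 a2 - p * (c1 o1 o2 + c2 o1 o2)
          - p * (c1 a1 a2 - c1 o1 bb) - (c2 a1 a2 - c2 a1 bb) - p * (c2 o1 bb - c2 o1 o2) \<le> 0"
proof -
  have h1: "a * w1 * (p - 1) \<ge> 0" "a * w2 * (p - 1) \<ge> 0" "b * w1 * w1 * (p - 1) \<ge> 0"
    "b * w2 * w2 * (p - 1) \<ge> 0" "b * w1 * w2 * (p - 1) \<ge> 0" "b * w1 * w2 \<ge> 0"
    using w1 w2 a b p1 by (simp_all add: mult_nonneg_nonneg)
  have h2: "b * ((p - 1) * (w1\<^sup>2 + w2\<^sup>2)) = b * (w1 * w2)" using pe by simp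
  show ?thesis
    unfolding c1_def c2_def ld_def
    apply (cases a1; cases a2; cases o1; cases o2; cases bb)
    apply (simp_all add: algebra_simps power2_eq_square)
    using h1 h2 by (simp_all add: algebra_simps power2_eq_square)
qed

lemma cost1_sum:
  assumes "finite R" "A1 \<subseteq> R"
  shows "cost1 \<alpha> \<beta> w1 w2 A1 A2 = (\<Sum>r\<in>R. if r \<in> A1 then w1 * (\<alpha> r + \<beta> r * load w1 w2 A1 A2 r) else 0)"
proof -
  have "A1 = R \<inter> A1" using assms by blast
  then have "(\<Sum>r\<in>A1. \<alpha> r + \<beta> r * load w1 w2 A1 A2 r) = (\<Sum>r\<in>R. if r \<in> A1 then \<alpha> r + \<beta> r * load w1 w2 A1 A2 r else 0)"
    using sum.inter_restrict[OF assms(1)] by metis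
  then show ?thesis unfolding cost1_def by (simp add: sum_distrib_left, intro sum.cong, auto)
qed

lemma cost2_sum:
  assumes "finite R" "A2 \<subseteq> R"
  shows "cost2 \<alpha> \<beta> w1 w2 A1 A2 = (\<Sum>r\<in>R. if r \<in> A2 then w2 * (\<alpha> r + \<beta> r * load w1 w2 A1 A2 r) else 0)"
proof -
  have "A2 = R \<inter> A2" using assms by blast
  then have "(\<Sum>r\<in>A2. \<alpha> r + \<beta> r * load w1 w2 A1 A2 r) = (\<Sum>r\<in>R. if r \<in> A2 then \<alpha> r + \<beta> r * load w1 w2 A1 A2 r else 0)"
    using sum.inter_restrict[OF assms(1)] by metis
  then show ?thesis unfolding cost2_def by (simp add: sum_distrib_left, intro sum.cong, auto)
qed

lemma key_ineq:
  fixes w1 w2 p :: real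
  assumes R: "finite R" and ab: "\<forall>r\<in>R. \<alpha> r \<ge> 0 \<and> \<beta> r \<ge> 0"
    and w1: "w1 \<ge> 0" and w2: "w2 \<ge> 0" and p1: "p \<ge> 1" and pe: "(p - 1) * (w1\<^sup>2 + w2\<^sup>2) = w1 * w2"
    and s: "A1 \<subseteq> R" "A2 \<subseteq> R" "O1 \<subseteq> R" "O2 \<subseteq> R" "B \<subseteq> R"
  shows "social_cost \<alpha> \<beta> w1 w2 A1 A2 - p * social_cost \<alpha> \<beta> w1 w2 O1 O2
     - p * (cost1 \<alpha> \<beta> w1 w2 A1 A2 - cost1 \<alpha> \<beta> w1 w2 O1 B)
     - (cost2 \<alpha> \<beta> w1 w2 A1 A2 - cost2 \<alpha> \<beta> w1 w2 A1 B)
     - p * (cost2 \<alpha> \<beta> w1 w2 O1 B - cost2 \<alpha> \<beta> w1 w2 O1 O2) \<le> 0"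
proof -
  define c1 where "c1 = (\<lambda>X Y r. if r \<in> X then w1 * (\<alpha> r + \<beta> r * load w1 w2 X Y r) else 0)"
  define c2 where "c2 = (\<lambda>X Y r. if r \<in> Y then w2 * (\<alpha> r + \<beta> r * load w1 w2 X Y r) else 0)"
  define \<phi> where "\<phi> = (\<lambda>r. c1 A1 A2 r + c2 A1 A2 r - p * (c1 O1 O2 r + c2 O1 O2 r)
          - p * (c1 A1 A2 r - c1 O1 B r) - (c2 A1 A2 r - c2 A1 B r) - p * (c2 O1 B r - c2 O1 O2 r))"
  have e: "social_cost \<alpha> \<beta> w1 w2 A1 A2 - p * social_cost \<alpha> \<beta> w1 w2 O1 O2
     - p * (cost1 \<alpha> \<beta> w1 w2 A1 A2 - cost1 \<alpha> \<beta> w1 w2 O1 B)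
     - (cost2 \<alpha> \<beta> w1 w2 A1 A2 - cost2 \<alpha> \<beta> w1 w2 A1 B)
     - p * (cost2 \<alpha> \<beta> w1 w2 O1 B - cost2 \<alpha> \<beta> w1 w2 O1 O2) = (\<Sum>r\<in>R. \<phi> r)"
    unfolding social_cost_def \<phi>_def
    using cost1_sum[OF R s(1)] cost1_sum[OF R s(3)] cost2_sum[OF R s(2)] cost2_sum[OF R s(4)]
      cost2_sum[OF R s(5), of _ _ _ _ A1] cost2_sum[OF R s(5), of _ _ _ _ O1]
    by (simp add: c1_def c2_def sum.distrib sum_subtractf sum_distrib_left right_diff_distrib distrib_left sum_negf)
  have "\<phi> r \<le> 0" if "r \<in> R" for r
  proof -
    have "\<alpha> r \<ge> 0" "\<beta> r \<ge> 0" using ab that by auto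
    from per_res[OF w1 w2 this p1 pe, of "r \<in> A1" "r \<in> A2" "r \<in> O1" "r \<in> O2" "r \<in> B"]
    show ?thesis unfolding \<phi>_def c1_def c2_def load_def by simp
  qed
  then have "(\<Sum>r\<in>R. \<phi> r) \<le> 0" by (simp add: sum_nonpos)
  with e show ?thesis by simp
qed

lemma spe_exists:
  assumes "finite As1" "As1 \<noteq> {}" "finite As2" "As2 \<noteq> {}"
  shows "\<exists>f A1s. is_spe \<alpha> \<beta> w1 w2 As1 As2 f A1s"
proof -
  define f where "f = (\<lambda>A1. arg_min_on (cost2 \<alpha> \<beta> w1 w2 A1) As2)"
  define A1s where "A1s = arg_min_on (\<lambda>A1. cost1 \<alpha> \<beta> w1 w2 A1 (f A1)) As1"
  have "is_spe \<alpha> \<beta> w1 w2 As1 As2 f A1s"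
    unfolding is_spe_def
  proof (intro conjI ballI)
    fix A1 assume "A1 \<in> As1"
    show "f A1 \<in> As2" unfolding f_def by (rule arg_min_if_finite(1)[OF assms(3,4)])
    fix A2 assume "A2 \<in> As2"
    then show "cost2 \<alpha> \<beta> w1 w2 A1 (f A1) \<le> cost2 \<alpha> \<beta> w1 w2 A1 A2"
      unfolding f_def by (rule arg_min_least[OF assms(3,4)])
  next
    show "A1s \<in> As1" unfolding A1s_def by (rule arg_min_if_finite(1)[OF assms(1,2)])
  next
    fix A1 assume "A1 \<in> As1"
    then show "cost1 \<alpha> \<beta> w1 w2 A1s (f A1s) \<le> cost1 \<alpha> \<beta> w1 w2 A1 (f A1)"
      unfolding A1s_def by (rule arg_min_least[OF assms(1,2)])
  qed
  then show ?thesis by blast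
qed

lemma poa_le:
  fixes w1 w2 p :: real
  assumes vg: "valid_game R \<alpha> \<beta> As1 As2" and opt: "opt_cost \<alpha> \<beta> w1 w2 As1 As2 > 0"
    and w1: "w1 \<ge> 0" and w2: "w2 \<ge> 0" and p1: "p \<ge> 1" and pe: "(p - 1) * (w1\<^sup>2 + w2\<^sup>2) = w1 * w2"
  shows "poa_instance \<alpha> \<beta> w1 w2 As1 As2 \<le> p"
proof -
  from vg have R: "finite R" and ab: "\<forall>r\<in>R. \<alpha> r \<ge> 0 \<and> \<beta> r \<ge> 0"
    and f1: "finite As1" "As1 \<noteq> {}" "\<forall>A\<in>As1. A \<subseteq> R"
    and f2: "finite As2" "As2 \<noteq> {}" "\<forall>A\<in>As2. A \<subseteq> R"
    unfolding valid_game_def by auto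
  have sub: "spe_outcomes \<alpha> \<beta> w1 w2 As1 As2 \<subseteq> As1 \<times> As2"
    unfolding spe_outcomes_def is_spe_def by auto
  then have fin: "finite (spe_outcomes \<alpha> \<beta> w1 w2 As1 As2)"
    using f1 f2 finite_subset by blast
  obtain f0 A0 where "is_spe \<alpha> \<beta> w1 w2 As1 As2 f0 A0" using spe_exists f1 f2 by metis
  then have ne: "spe_outcomes \<alpha> \<beta> w1 w2 As1 As2 \<noteq> {}" unfolding spe_outcomes_def by blast
  let ?S = "{social_cost \<alpha> \<beta> w1 w2 A1 A2 | A1 A2. A1 \<in> As1 \<and> A2 \<in> As2}"
  have Seq: "?S = (\<lambda>(x, y). social_cost \<alpha> \<beta> w1 w2 x y) ` (As1 \<times> As2)" by auto
  have Sfin: "finite ?S" "?S \<noteq> {}" unfolding Seq using f1 f2 by auto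
  obtain O1 O2 where O: "O1 \<in> As1" "O2 \<in> As2"
    and Oeq: "opt_cost \<alpha> \<beta> w1 w2 As1 As2 = social_cost \<alpha> \<beta> w1 w2 O1 O2"
    using Min_in[OF Sfin] unfolding opt_cost_def by auto
  have "x \<le> p" if "x \<in> (\<lambda>(A1, A2). social_cost \<alpha> \<beta> w1 w2 A1 A2 / opt_cost \<alpha> \<beta> w1 w2 As1 As2)
            ` spe_outcomes \<alpha> \<beta> w1 w2 As1 As2" for x
  proof -
    from that obtain f A1s where spe: "is_spe \<alpha> \<beta> w1 w2 As1 As2 f A1s"
      and x: "x = social_cost \<alpha> \<beta> w1 w2 A1s (f A1s) / opt_cost \<alpha> \<beta> w1 w2 As1 As2"
      unfolding spe_outcomes_def by auto
    from spe O have A1s: "A1s \<in> As1" and fA: "f A1s \<in> As2" and fO: "f O1 \<in> As2"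
      and i1: "cost1 \<alpha> \<beta> w1 w2 A1s (f A1s) \<le> cost1 \<alpha> \<beta> w1 w2 O1 (f O1)"
      and i3: "cost2 \<alpha> \<beta> w1 w2 A1s (f A1s) \<le> cost2 \<alpha> \<beta> w1 w2 A1s (f O1)"
      and i4: "cost2 \<alpha> \<beta> w1 w2 O1 (f O1) \<le> cost2 \<alpha> \<beta> w1 w2 O1 O2"
      unfolding is_spe_def by auto
    have k: "social_cost \<alpha> \<beta> w1 w2 A1s (f A1s) - p * social_cost \<alpha> \<beta> w1 w2 O1 O2
     - p * (cost1 \<alpha> \<beta> w1 w2 A1s (f A1s) - cost1 \<alpha> \<beta> w1 w2 O1 (f O1))
     - (cost2 \<alpha> \<beta> w1 w2 A1s (f A1s) - cost2 \<alpha> \<beta> w1 w2 A1s (f O1))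
     - p * (cost2 \<alpha> \<beta> w1 w2 O1 (f O1) - cost2 \<alpha> \<beta> w1 w2 O1 O2) \<le> 0"
      by (rule key_ineq[OF R ab w1 w2 p1 pe]) (use A1s fA fO O f1 f2 in auto)
    have "p * (cost1 \<alpha> \<beta> w1 w2 A1s (f A1s) - cost1 \<alpha> \<beta> w1 w2 O1 (f O1)) \<le> 0"
      using i1 p1 by (simp add: mult_nonneg_nonpos)
    moreover have "p * (cost2 \<alpha> \<beta> w1 w2 O1 (f O1) - cost2 \<alpha> \<beta> w1 w2 O1 O2) \<le> 0"
      using i4 p1 by (simp add: mult_nonneg_nonpos)
    ultimately have "social_cost \<alpha> \<beta> w1 w2 A1s (f A1s) \<le> p * opt_cost \<alpha> \<beta> w1 w2 As1 As2"
      unfolding Oeq using k i3 by linarith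
    then show ?thesis using x opt by (simp add: divide_le_eq mult.commute)
  qed
  then show ?thesis
    unfolding poa_instance_def using fin ne by (simp add: Max_le_iff)
qed

definition "srcE = (\<lambda>e::nat. if e = 3 \<or> e = 4 then 1 else (0::nat))"
definition "tgtE = (\<lambda>e::nat. if e = 0 \<or> e = 3 then 2 else if e = 2 then 1 else (3::nat))"
definition "RE = {0,1,2,3,4::nat}"

lemma len3:
  assumes "is_path RE srcE tgtE s t es"
  shows "length es \<le> 3"
proof -
  have d: "distinct (map tgtE es)" using assms unfolding is_path_def by simp
  have "set (map tgtE es) \<subseteq> {1,2,3}" using assms unfolding is_path_def tgtE_def RE_def by auto
  then have "card (set (map tgtE es)) \<le> 3"
  proof -
    have "card (set (map tgtE es)) \<le> card {1,2,3::nat}" by (rule card_mono) (use \<open>set (map tgtE es) \<subseteq> {1,2,3}\<close> in auto)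
    then show ?thesis by simp
  qed
  then show ?thesis using distinct_card[OF d] by simp
qed

lemma list_le3: "length (es::nat list) \<le> 3 \<Longrightarrow> es = [] \<or> (\<exists>a. es = [a]) \<or> (\<exists>a b. es = [a,b]) \<or> (\<exists>a b c. es = [a,b,c])"
  by (cases es; cases "tl es"; cases "tl (tl es)"; cases "tl (tl (tl es))") auto

lemma path1: "is_path RE srcE tgtE 0 2 es \<longleftrightarrow> es = [0] \<or> es = [2,3]"
proof
  assume p: "is_path RE srcE tgtE 0 2 es"
  have s: "set es \<subseteq> RE" using p unfolding is_path_def by simp
  from list_le3[OF len3[OF p]] show "es = [0] \<or> es = [2,3]"
  proof (elim disjE exE)
    assume "es = []" then show ?thesis using p unfolding is_path_def by simp
  next
    fix a assume "es = [a]" then show ?thesis using p s unfolding is_path_def RE_def srcE_def tgtE_def by auto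
  next
    fix a b assume "es = [a,b]" then show ?thesis using p s unfolding is_path_def RE_def srcE_def tgtE_def
      by (auto simp: less_Suc_eq)
  next
    fix a b c assume e: "es = [a,b,c]"
    have c1: "tgtE a = srcE b" "tgtE b = srcE c" "tgtE a \<noteq> tgtE b"
      using p e unfolding is_path_def by (auto dest: spec[of _ 0] spec[of _ 1])
    have h: "tgtE x \<noteq> 0" "srcE x = 0 \<or> srcE x = 1" for x unfolding tgtE_def srcE_def by auto
    have False using c1 h[of a] h[of b] h[of c] by metis
    then show ?thesis by simp
  qed
next
  assume "es = [0] \<or> es = [2,3]"
  then show "is_path RE srcE tgtE 0 2 es" unfolding is_path_def RE_def srcE_def tgtE_def
    by (auto simp: less_Suc_eq)
qed

lemma path2: "is_path RE srcE tgtE 0 3 es \<longleftrightarrow> es = [1] \<or> es = [2,4]"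
proof
  assume p: "is_path RE srcE tgtE 0 3 es"
  have s: "set es \<subseteq> RE" using p unfolding is_path_def by simp
  from list_le3[OF len3[OF p]] show "es = [1] \<or> es = [2,4]"
  proof (elim disjE exE)
    assume "es = []" then show ?thesis using p unfolding is_path_def by simp
  next
    fix a assume "es = [a]" then show ?thesis using p s unfolding is_path_def RE_def srcE_def tgtE_def by auto
  next
    fix a b assume "es = [a,b]" then show ?thesis using p s unfolding is_path_def RE_def srcE_def tgtE_def
      by (auto simp: less_Suc_eq)
  next
    fix a b c assume e: "es = [a,b,c]"
    have c1: "tgtE a = srcE b" "tgtE b = srcE c" "tgtE a \<noteq> tgtE b"
      using p e unfolding is_path_def by (auto dest: spec[of _ 0] spec[of _ 1])
    have h: "tgtE x \<noteq> 0" "srcE x = 0 \<or> srcE x = 1" for x unfolding tgtE_def srcE_def by auto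
    have False using c1 h[of a] h[of b] h[of c] by metis
    then show ?thesis by simp
  qed
next
  assume "es = [1] \<or> es = [2,4]"
  then show "is_path RE srcE tgtE 0 3 es" unfolding is_path_def RE_def srcE_def tgtE_def
    by (auto simp: less_Suc_eq)
qed

lemma pa1: "path_actions RE srcE tgtE 0 2 = {{0},{2,3}}"
  unfolding path_actions_def path1 by (auto, rule exI[of _ "[0]"], simp, rule exI[of _ "[2,3]"], simp)

lemma pa2: "path_actions RE srcE tgtE 0 3 = {{1},{2,4}}"
  unfolding path_actions_def path2 by (auto, rule exI[of _ "[1]"], simp, rule exI[of _ "[2,4]"], simp)

definition "aE w1 w2 = (\<lambda>e::nat. if e = 0 then w1 else if e = 1 then w1 + w2 else (0::real))"
definition "bE = (\<lambda>e::nat. if e = 2 then 1 else (0::real))"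

lemma sc_vals:
  "social_cost (aE w1 w2) bE w1 w2 {0} {1} = w1\<^sup>2 + w1 * w2 + w2\<^sup>2"
  "social_cost (aE w1 w2) bE w1 w2 {0} {2,4} = w1\<^sup>2 + w2\<^sup>2"
  "social_cost (aE w1 w2) bE w1 w2 {2,3} {1} = w1\<^sup>2 + w1 * w2 + w2\<^sup>2"
  "social_cost (aE w1 w2) bE w1 w2 {2,3} {2,4} = (w1 + w2)\<^sup>2"
  by (simp_all add: social_cost_def cost1_def cost2_def load_def aE_def bE_def power2_eq_square algebra_simps)

lemma valid_inst: "w1 \<ge> 0 \<Longrightarrow> w2 \<ge> 0 \<Longrightarrow> valid_game RE (aE w1 w2) bE {{0},{2,3}} {{1},{2,4}}"
  unfolding valid_game_def RE_def aE_def bE_def by auto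
lemma opt_inst:
  assumes "w1 \<ge> 0" "w2 \<ge> 0"
  shows "opt_cost (aE w1 w2) bE w1 w2 {{0},{2,3}} {{1},{2,4}} = w1\<^sup>2 + w2\<^sup>2"
proof -
  let ?S = "{social_cost (aE w1 w2) bE w1 w2 A1 A2 | A1 A2. A1 \<in> {{0::nat},{2,3}} \<and> A2 \<in> {{1},{2,4}}}"
  have Seq: "?S = (\<lambda>(x, y). social_cost (aE w1 w2) bE w1 w2 x y) ` ({{0::nat},{2,3}} \<times> {{1},{2,4}})" by auto
  have fin: "finite ?S" unfolding Seq by simp
  have w: "w1 * w2 \<ge> 0" using assms by simp
  have "Min ?S = w1\<^sup>2 + w2\<^sup>2"
  proof (rule Min_eqI[OF fin])
    fix y assume "y \<in> ?S"
    then show "w1\<^sup>2 + w2\<^sup>2 \<le> y" using w by (auto simp: sc_vals sc_vals[simplified] power2_eq_square algebra_simps)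
  next
    have "social_cost (aE w1 w2) bE w1 w2 {0} {2,4} \<in> ?S" by blast
    then show "w1\<^sup>2 + w2\<^sup>2 \<in> ?S" by (simp only: sc_vals(2))
  qed
  then show ?thesis unfolding opt_cost_def .
qed

lemma c_vals:
  "cost2 (aE w1 w2) bE w1 w2 {2,3} {1} = w2 * (w1 + w2)"
  "cost2 (aE w1 w2) bE w1 w2 {2,3} {2,4} = w2 * (w1 + w2)"
  "cost2 (aE w1 w2) bE w1 w2 {0} {1} = w2 * (w1 + w2)"
  "cost2 (aE w1 w2) bE w1 w2 {0} {2,4} = w2 * w2"
  "cost1 (aE w1 w2) bE w1 w2 {2,3} {1} = w1 * w1"
  "cost1 (aE w1 w2) bE w1 w2 {0} {2,4} = w1 * w1"
  by (simp_all add: cost1_def cost2_def load_def aE_def bE_def algebra_simps)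

lemma spe_inst:
  assumes "w1 \<ge> 0" "w2 \<ge> 0"
  shows "is_spe (aE w1 w2) bE w1 w2 {{0},{2,3}} {{1},{2,4}} (\<lambda>A. if A = {2,3} then {1} else {2,4}) {2,3}"
proof -
  have ne: "({0::nat} = {2,3}) = False" by auto
  have "w2 * w2 \<le> w2 * (w1 + w2)" using assms by (simp add: mult_left_mono)
  then show ?thesis
    unfolding is_spe_def by (simp add: ne c_vals c_vals[simplified])
qed
lemma spe_sub: "spe_outcomes \<alpha> \<beta> w1 w2 As1 As2 \<subseteq> As1 \<times> As2"
  unfolding spe_outcomes_def is_spe_def by auto

lemma poa_inst:
  fixes w1 w2 :: real
  assumes "w1 \<ge> 0" "w2 \<ge> 0" "w1 + w2 > 0"
  shows "poa_instance (aE w1 w2) bE w1 w2 {{0},{2,3}} {{1},{2,4}} \<ge> 1 + w1 * w2 / (w1\<^sup>2 + w2\<^sup>2)"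
proof -
  let ?O = "spe_outcomes (aE w1 w2) bE w1 w2 {{0::nat},{2,3}} {{1},{2,4}}"
  let ?g = "\<lambda>(A1, A2). social_cost (aE w1 w2) bE w1 w2 A1 A2 / opt_cost (aE w1 w2) bE w1 w2 {{0::nat},{2,3}} {{1},{2,4}}"
  have "w1 \<noteq> 0 \<or> w2 \<noteq> 0" using assms by auto
  then have D: "w1\<^sup>2 + w2\<^sup>2 > 0" by (simp add: sum_power2_gt_zero_iff)
  have mem: "({2,3}, {1}) \<in> ?O"
  proof -
    let ?f = "\<lambda>A::nat set. if A = {2,3} then {1::nat} else {2,4}"
    have "({2,3}, ?f {2,3}) \<in> ?O"
      unfolding spe_outcomes_def
      by (rule CollectI, rule exI[of _ ?f], rule exI[of _ "{2,3}"], rule conjI[OF refl spe_inst[OF assms(1,2)]])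
    then show ?thesis by simp
  qed
  have fin0: "finite ({{0::nat},{2,3}} \<times> {{1::nat},{2,4}})" by simp
  have fin: "finite ?O" by (rule finite_subset[OF spe_sub fin0])
  have "?g ({2,3}, {1}) \<le> Max (?g ` ?O)"
    by (rule Max_ge[OF finite_imageI[OF fin] imageI[OF mem]])
  then have le: "social_cost (aE w1 w2) bE w1 w2 {2,3} {1} / opt_cost (aE w1 w2) bE w1 w2 {{0},{2,3}} {{1},{2,4}}
      \<le> poa_instance (aE w1 w2) bE w1 w2 {{0},{2,3}} {{1},{2,4}}"
    unfolding poa_instance_def by (simp only: prod.case)
  have "social_cost (aE w1 w2) bE w1 w2 {2,3} {1} / opt_cost (aE w1 w2) bE w1 w2 {{0},{2,3}} {{1},{2,4}}
      = (w1\<^sup>2 + w1 * w2 + w2\<^sup>2) / (w1\<^sup>2 + w2\<^sup>2)"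
    by (simp only: sc_vals opt_inst[OF assms(1,2)])
  also have "\<dots> = 1 + w1 * w2 / (w1\<^sup>2 + w2\<^sup>2)"
  proof -
    have D': "w1\<^sup>2 + w2\<^sup>2 \<noteq> 0" using D by linarith
    have "(w1\<^sup>2 + w1 * w2 + w2\<^sup>2) = (w1\<^sup>2 + w2\<^sup>2) + w1 * w2" by simp
    then show ?thesis using D' by (simp only: add_divide_distrib[of "w1\<^sup>2 + w2\<^sup>2" "w1 * w2"] divide_self[OF D'])
  qed
  finally show ?thesis using le by simp
qed

theorem theorem7:
  fixes w1 w2 :: real
  assumes "w1 \<ge> 0" and "w2 \<ge> 0" and "w1 + w2 > 0"
  shows "is_supremum (congestion_poas w1 w2) (1 + w1 * w2 / (w1\<^sup>2 + w2\<^sup>2)) \<and>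
         is_supremum (network_poas w1 w2) (1 + w1 * w2 / (w1\<^sup>2 + w2\<^sup>2))"
proof -
  define p where "p = 1 + w1 * w2 / (w1\<^sup>2 + w2\<^sup>2)"
  have "w1 \<noteq> 0 \<or> w2 \<noteq> 0" using assms by auto
  then have D: "w1\<^sup>2 + w2\<^sup>2 > 0" by (simp add: sum_power2_gt_zero_iff)
  have p1: "p \<ge> 1" unfolding p_def using assms D by simp
  have pe: "(p - 1) * (w1\<^sup>2 + w2\<^sup>2) = w1 * w2" unfolding p_def using D by simp
  have ubC: "\<forall>x\<in>congestion_poas w1 w2. x \<le> p"
  proof
    fix x assume "x \<in> congestion_poas w1 w2"
    then obtain R :: "nat set" and \<alpha> \<beta> As1 As2 where x: "x = poa_instance \<alpha> \<beta> w1 w2 As1 As2"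
      and v: "valid_game R \<alpha> \<beta> As1 As2" and o: "opt_cost \<alpha> \<beta> w1 w2 As1 As2 > 0"
      unfolding congestion_poas_def by blast
    show "x \<le> p" unfolding x by (rule poa_le[OF v o assms(1,2) p1 pe])
  qed
  have ubN: "\<forall>x\<in>network_poas w1 w2. x \<le> p"
  proof
    fix x assume "x \<in> network_poas w1 w2"
    then obtain R :: "nat set" and \<alpha> \<beta> As1 As2 where x: "x = poa_instance \<alpha> \<beta> w1 w2 As1 As2"
      and v: "valid_game R \<alpha> \<beta> As1 As2" and o: "opt_cost \<alpha> \<beta> w1 w2 As1 As2 > 0"
      unfolding network_poas_def by blast
    show "x \<le> p" unfolding x by (rule poa_le[OF v o assms(1,2) p1 pe])
  qed
  define P0 where "P0 = poa_instance (aE w1 w2) bE w1 w2 {{0},{2,3}} {{1},{2,4}}"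
  have v0: "valid_game RE (aE w1 w2) bE {{0},{2,3}} {{1},{2,4}}" by (rule valid_inst[OF assms(1,2)])
  have o0: "opt_cost (aE w1 w2) bE w1 w2 {{0},{2,3}} {{1},{2,4}} > 0"
    using opt_inst[OF assms(1,2)] D by simp
  have P0ge: "P0 \<ge> p" unfolding P0_def p_def by (rule poa_inst[OF assms])
  have inC: "P0 \<in> congestion_poas w1 w2"
    unfolding congestion_poas_def
    apply (rule CollectI)
    apply (rule exI[of _ RE], rule exI[of _ "aE w1 w2"], rule exI[of _ bE],
           rule exI[of _ "{{0},{2,3}}"], rule exI[of _ "{{1},{2,4}}"])
    using v0 o0 P0_def by simp
  have inN: "P0 \<in> network_poas w1 w2"
    unfolding network_poas_def
    apply (rule CollectI)
    apply (rule exI[of _ RE], rule exI[of _ "aE w1 w2"], rule exI[of _ bE],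
           rule exI[of _ "{{0},{2,3}}"], rule exI[of _ "{{1},{2,4}}"],
           rule exI[of _ srcE], rule exI[of _ tgtE], rule exI[of _ 0], rule exI[of _ 2],
           rule exI[of _ 0], rule exI[of _ 3])
    using v0 o0 P0_def pa1 pa2 by simp
  have lo: "\<forall>\<epsilon>>0. \<exists>x\<in>S. p - \<epsilon> < x" if "P0 \<in> S" for S
    using that P0ge by force
  show ?thesis
    unfolding p_def[symmetric] is_supremum_def using ubC ubN lo inC inN by blast
qed

end
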